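(* The size $b$ of the smallest bidirectional scheme satisfies $\mathsf{MS}_{\mathrm{sub}}(b,n)\ge 2$ and $\mathsf{MS}_{\mathrm{ins}}(b,n)\ge 2$.
   Context: Strings are over an alphabet $\Sigma$ with at least two characters; $\mathsf{ed}$ is the edit distance. $\mathsf{MS}_{\mathrm{sub}}(C,n)=\max_{T\in\Sigma^n}\{C(T')/C(T): T'\in\Sigma^n,\ \mathsf{ed}(T,T')=1\}$ and $\mathsf{MS}_{\mathrm{ins}}(C,n)$ is the same with $T'\in\Sigma^{n+1}$. A bidirectional scheme of $T$ (length $n$) is a factorization $T=f_1\cdots f_b$ where each phrase $f_j=T[p_j..p_j+\ell_j-1]$ is either a single character (ground phrase) or is given a source $q_j\neq p_j$ with $T[q_j..q_j+\ell_j-1]=f_j$. It defines $F:[0..n]\to[0..n]$ by $F(p_j)=0$ for ground phrases, $F(p_j+k)=q_j+k$ for $0\le k<\ell_j$ otherwise, and $F(0)=0$; the scheme is valid if for every $x$ some iterate $F^m(x)=0$ ($m\ge1$). $b(T)$ is the minimum number of phrases of a valid bidirectional scheme of $T$. *)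

theory Defs
  imports Main "HOL.Real"
begin

text \<open>Strings are lists over an alphabet type 'a. Positions are 1-based:
  character T[i] (1 <= i <= n) is T ! (i - 1).\<close>

fun ed :: "'a list \<Rightarrow> 'a list \<Rightarrow> nat" where
  "ed [] ys = length ys"
| "ed xs [] = length xs"
| "ed (x # xs) (y # ys) =
     min (min (ed xs (y # ys) + 1) (ed (x # xs) ys + 1))
         (ed xs ys + (if x = y then 0 else 1))"

text \<open>A phrase is a pair (length, source): source None = ground phrase,
  source Some q = phrase copied from 1-based position q.\<close>
type_synonym phrase = "nat \<times> nat option"

definition pstart :: "phrase list \<Rightarrow> nat \<Rightarrow> nat" where
  "pstart S j = 1 + sum_list (map fst (take j S))"

definition schemeF :: "phrase list \<Rightarrow> nat \<Rightarrow> nat" where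
  "schemeF S x =
     (if x = 0 then 0
      else if (\<exists>j<length S. pstart S j \<le> x \<and> x < pstart S j + fst (S ! j))
      then (let j = (LEAST j. j < length S \<and> pstart S j \<le> x \<and> x < pstart S j + fst (S ! j))
            in (case snd (S ! j) of None \<Rightarrow> 0 | Some q \<Rightarrow> q + (x - pstart S j)))
      else 0)"

definition valid_bidir_scheme :: "'a list \<Rightarrow> phrase list \<Rightarrow> bool" where
  "valid_bidir_scheme T S \<longleftrightarrow>
     sum_list (map fst S) = length T
   \<and> (\<forall>j<length S.
        1 \<le> fst (S ! j)
      \<and> (case snd (S ! j) of
           None \<Rightarrow> fst (S ! j) = 1
         | Some q \<Rightarrow> q \<noteq> pstart S j \<and> 1 \<le> q \<and> q + fst (S ! j) - 1 \<le> length T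
                   \<and> (\<forall>k<fst (S ! j). T ! (q + k - 1) = T ! (pstart S j + k - 1))))
   \<and> (\<forall>x\<le>length T. \<exists>m\<ge>1. (schemeF S ^^ m) x = 0)"

definition bidir_b :: "'a list \<Rightarrow> nat" where
  "bidir_b T = (LEAST k. \<exists>S. valid_bidir_scheme T S \<and> length S = k)"

definition MS_sub :: "('a list \<Rightarrow> nat) \<Rightarrow> nat \<Rightarrow> real" where
  "MS_sub C n = Sup {real (C T') / real (C T) | T T'.
      length T = n \<and> length T' = n \<and> ed T T' = 1}"

definition MS_ins :: "('a list \<Rightarrow> nat) \<Rightarrow> nat \<Rightarrow> real" where
  "MS_ins C n = Sup {real (C T') / real (C T) | T T'.
      length T = n \<and> length T' = n + 1 \<and> ed T T' = 1}"

end

theory Submission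
  imports Defs
begin

lemma pstart_0[simp]: "pstart S 0 = 1"
  by (simp add: pstart_def)

lemma pstart_Cons_Suc[simp]: "pstart (s # S) (Suc j) = fst s + pstart S j"
  by (simp add: pstart_def)

lemma cover:
  "1 \<le> x \<Longrightarrow> x \<le> sum_list (map fst S) \<Longrightarrow>
   \<exists>j<length S. pstart S j \<le> x \<and> x < pstart S j + fst (S ! j)"
proof (induction S arbitrary: x)
  case Nil then show ?case by simp
next
  case (Cons s S)
  show ?case
  proof (cases "x \<le> fst s")
    case True
    then show ?thesis using Cons.prems by (intro exI[of _ 0]) auto
  next
    case False
    then obtain j where "j < length S" "pstart S j \<le> x - fst s" "x - fst s < pstart S j + fst (S ! j)"
      using Cons.IH[of "x - fst s"] Cons.prems False by fastforce
    then show ?thesis using False by (intro exI[of _ "Suc j"]) auto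
  qed
qed

lemma Fstep:
  assumes v: "valid_bidir_scheme T S" and x: "1 \<le> x" "x \<le> length T"
  shows "(schemeF S x = 0 \<and> (\<exists>j<length S. snd (S ! j) = None \<and> fst (S ! j) = 1 \<and> pstart S j = x))
     \<or> (1 \<le> schemeF S x \<and> schemeF S x \<le> length T \<and> T ! (schemeF S x - 1) = T ! (x - 1))"
proof -
  have sum: "sum_list (map fst S) = length T" using v by (simp add: valid_bidir_scheme_def)
  have ex: "\<exists>j<length S. pstart S j \<le> x \<and> x < pstart S j + fst (S ! j)"
    using cover[of x S] x sum by simp
  define j where "j = (LEAST j. j < length S \<and> pstart S j \<le> x \<and> x < pstart S j + fst (S ! j))"
  have j: "j < length S" "pstart S j \<le> x" "x < pstart S j + fst (S ! j)"
    using LeastI_ex[OF ex[unfolded Bex_def[symmetric]]] unfolding j_def by auto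
  have Fx: "schemeF S x = (case snd (S ! j) of None \<Rightarrow> 0 | Some q \<Rightarrow> q + (x - pstart S j))"
    using ex x unfolding schemeF_def Let_def j_def by simp
  have vj: "1 \<le> fst (S ! j) \<and> (case snd (S ! j) of
           None \<Rightarrow> fst (S ! j) = 1
         | Some q \<Rightarrow> q \<noteq> pstart S j \<and> 1 \<le> q \<and> q + fst (S ! j) - 1 \<le> length T
                   \<and> (\<forall>k<fst (S ! j). T ! (q + k - 1) = T ! (pstart S j + k - 1)))"
    using v j(1) unfolding valid_bidir_scheme_def by blast
  show ?thesis
  proof (cases "snd (S ! j)")
    case None
    then have "fst (S ! j) = 1" using vj by simp
    then show ?thesis using None Fx j by (intro disjI1) auto
  next
    case (Some q)
    then have q: "1 \<le> q" "q + fst (S ! j) - 1 \<le> length T"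
      "\<forall>k<fst (S ! j). T ! (q + k - 1) = T ! (pstart S j + k - 1)"
      using vj by auto
    have "T ! (q + (x - pstart S j) - 1) = T ! (pstart S j + (x - pstart S j) - 1)"
    proof -
      have "x - pstart S j < fst (S ! j)" using j by linarith
      then show ?thesis using q(3) by blast
    qed
    also have "pstart S j + (x - pstart S j) = x" using j by simp
    finally show ?thesis using Some Fx q j by (intro disjI2) auto
  qed
qed

lemma ground_exists:
  assumes v: "valid_bidir_scheme T S"
  shows "1 \<le> x \<Longrightarrow> x \<le> length T \<Longrightarrow> (schemeF S ^^ m) x = 0 \<Longrightarrow> 1 \<le> m \<Longrightarrow>
    \<exists>j<length S. snd (S ! j) = None \<and> fst (S ! j) = 1 \<and> 1 \<le> pstart S j \<and> pstart S j \<le> length T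
      \<and> T ! (pstart S j - 1) = T ! (x - 1)"
proof (induction m arbitrary: x)
  case 0 then show ?case by simp
next
  case (Suc m)
  have eq: "(schemeF S ^^ m) (schemeF S x) = 0" using Suc.prems(3) by (simp add: funpow_Suc_right del: funpow.simps)
  from Fstep[OF v Suc.prems(1,2)] show ?case
  proof
    assume "schemeF S x = 0 \<and> (\<exists>j<length S. snd (S ! j) = None \<and> fst (S ! j) = 1 \<and> pstart S j = x)"
    then show ?thesis using Suc.prems by auto
  next
    assume h: "1 \<le> schemeF S x \<and> schemeF S x \<le> length T \<and> T ! (schemeF S x - 1) = T ! (x - 1)"
    then have "m \<noteq> 0" using eq by (cases m) auto
    then show ?thesis using Suc.IH[of "schemeF S x"] h eq by auto
  qed
qed

lemma char_ground:
  assumes v: "valid_bidir_scheme T S" and i: "i < length T"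
  shows "\<exists>j<length S. snd (S ! j) = None \<and> fst (S ! j) = 1 \<and> 1 \<le> pstart S j \<and> pstart S j \<le> length T
      \<and> T ! (pstart S j - 1) = T ! i"
proof -
  obtain m where "m \<ge> 1" "(schemeF S ^^ m) (Suc i) = 0"
    using v i unfolding valid_bidir_scheme_def by (meson Suc_leI)
  then show ?thesis using ground_exists[OF v, of "Suc i" m] i by auto
qed

lemma schemeF_ground:
  assumes "\<forall>j<length S. snd (S ! j) = None"
  shows "schemeF S x = 0"
proof -
  have "\<forall>j. j < length S \<and> pstart S j \<le> x \<and> x < pstart S j + fst (S ! j) \<longrightarrow> snd (S ! j) = None"
    using assms by auto
  then show ?thesis unfolding schemeF_def Let_def
    by (smt (verit, best) LeastI_ex option.simps(4))
qed

lemma valid_ground: "valid_bidir_scheme T (replicate (length T) (1, None))"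
proof -
  have s: "sum_list (map fst (replicate n (1::nat, None::nat option))) = n" for n
    by (induction n) auto
  show ?thesis unfolding valid_bidir_scheme_def
    using schemeF_ground[of "replicate (length T) (1, None)"] s
    by (auto intro!: exI[of _ 1])
qed

lemma b_props: "\<exists>S. valid_bidir_scheme T S \<and> length S = bidir_b T"
  unfolding bidir_b_def
  by (rule LeastI_ex) (use valid_ground in blast)

lemma b_le: "valid_bidir_scheme T S \<Longrightarrow> bidir_b T \<le> length S"
  unfolding bidir_b_def by (rule Least_le) blast

lemma b_le_length: "bidir_b T \<le> length T"
  using b_le[OF valid_ground[of T]] by simp

lemma b_pos: "T \<noteq> [] \<Longrightarrow> 1 \<le> bidir_b T"
proof -
  assume "T \<noteq> []"
  obtain S where "valid_bidir_scheme T S" "length S = bidir_b T" using b_props by blast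
  then show ?thesis using \<open>T \<noteq> []\<close> unfolding valid_bidir_scheme_def
    by (cases S) auto
qed

lemma b_rep_le2:
  assumes n: "2 \<le> n"
  shows "bidir_b (replicate n a) \<le> 2"
proof -
  define S where "S = [(1::nat, None::nat option), (n - 1, Some 1)]"
  have p1: "pstart S 1 = 2" by (simp add: S_def pstart_def)
  have F0: "schemeF S 0 = 0" by (simp add: schemeF_def)
  have F1: "schemeF S 1 = 0"
  proof -
    have "(LEAST j. j < length S \<and> pstart S j \<le> 1 \<and> 1 < pstart S j + fst (S ! j)) = 0"
      by (rule Least_equality) (auto simp: S_def)
    then show ?thesis unfolding schemeF_def Let_def using n
      by (auto simp: S_def)
  qed
  have F2: "schemeF S x = x - 1" if "2 \<le> x" "x \<le> n" for x
  proof -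
    have L: "(LEAST j. j < length S \<and> pstart S j \<le> x \<and> x < pstart S j + fst (S ! j)) = 1"
    proof (rule Least_equality)
      show "1 < length S \<and> pstart S 1 \<le> x \<and> x < pstart S 1 + fst (S ! 1)"
        using that p1 by (simp add: S_def)
      show "\<And>y. y < length S \<and> pstart S y \<le> x \<and> x < pstart S y + fst (S ! y) \<Longrightarrow> 1 \<le> y"
      proof (rule ccontr)
        fix y assume "y < length S \<and> pstart S y \<le> x \<and> x < pstart S y + fst (S ! y)" "\<not> 1 \<le> y"
        then have "y = 0" by simp
        then have "x < 2" using \<open>y < length S \<and> pstart S y \<le> x \<and> x < pstart S y + fst (S ! y)\<close>
          by (simp add: S_def)
        then show False using that by simp
      qed
    qed
    have E: "\<exists>j<length S. pstart S j \<le> x \<and> x < pstart S j + fst (S ! j)"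
      using that p1 by (intro exI[of _ 1]) (simp add: S_def)
    show ?thesis unfolding schemeF_def Let_def L using E that p1
      by (simp add: S_def)
  qed
  have it: "x \<le> n \<Longrightarrow> (schemeF S ^^ Suc x) x = 0" for x
  proof (induction x)
    case 0 then show ?case using F0 by simp
  next
    case (Suc y)
    show ?case
    proof (cases y)
      case 0 then show ?thesis using F0 F1 by simp
    next
      case (Suc z)
      then have "schemeF S (Suc y) = y" using F2[of "Suc y"] Suc.prems by simp
      then show ?thesis using Suc.IH Suc.prems by (simp add: funpow_Suc_right del: funpow.simps)
    qed
  qed
  have "valid_bidir_scheme (replicate n a) S"
  proof -
    have A: "sum_list (map fst S) = length (replicate n a)" using n by (simp add: S_def)
    have B: "\<forall>j<length S. 1 \<le> fst (S ! j) \<and> (case snd (S ! j) of None \<Rightarrow> fst (S ! j) = 1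
         | Some q \<Rightarrow> q \<noteq> pstart S j \<and> 1 \<le> q \<and> q + fst (S ! j) - 1 \<le> length (replicate n a)
              \<and> (\<forall>k<fst (S ! j). replicate n a ! (q + k - 1) = replicate n a ! (pstart S j + k - 1)))"
    proof (intro allI impI)
      fix j assume j: "j < length S"
      then have "j = 0 \<or> j = 1" by (simp add: S_def) linarith
      then show "1 \<le> fst (S ! j) \<and> (case snd (S ! j) of None \<Rightarrow> fst (S ! j) = 1
         | Some q \<Rightarrow> q \<noteq> pstart S j \<and> 1 \<le> q \<and> q + fst (S ! j) - 1 \<le> length (replicate n a)
              \<and> (\<forall>k<fst (S ! j). replicate n a ! (q + k - 1) = replicate n a ! (pstart S j + k - 1)))"
        using n p1 by (auto simp: S_def)
    qed
    have C: "\<forall>x\<le>length (replicate n a). \<exists>m\<ge>1. (schemeF S ^^ m) x = 0"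
      using it by (auto intro!: exI[of _ "Suc _"])
    show ?thesis unfolding valid_bidir_scheme_def using A B C by blast
  qed
  then show ?thesis using b_le by (fastforce simp: S_def)
qed

lemma pos_c:
  assumes "a \<noteq> c" "p < length (replicate k a @ c # replicate k a)"
    "(replicate k a @ c # replicate k a) ! p = c"
  shows "p = k"
proof -
  consider "p < k" | "p = k" | "p > k" by linarith
  then show ?thesis
  proof cases
    case 1 then show ?thesis using assms by (simp add: nth_append)
  next
    case 2 then show ?thesis .
  next
    case 3
    then obtain d where "p = Suc (k + d)" by (metis less_iff_Suc_add)
    then show ?thesis using assms by (simp add: nth_append)
  qed
qed

lemma b_lower:
  assumes ac: "a \<noteq> c" and k: "2 \<le> k"
  shows "4 \<le> bidir_b (replicate k a @ c # replicate k a)"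
proof (rule ccontr)
  let ?T = "replicate k a @ c # replicate k a"
  assume "\<not> 4 \<le> bidir_b ?T"
  obtain S where v: "valid_bidir_scheme ?T S" and lS: "length S = bidir_b ?T" using b_props by blast
  have l3: "length S \<le> 3" using lS \<open>\<not> 4 \<le> bidir_b ?T\<close> by simp
  have sum: "sum_list (map fst S) = 2 * k + 1" using v unfolding valid_bidir_scheme_def by simp
  obtain jc where jc: "jc < length S" "snd (S ! jc) = None" "fst (S ! jc) = 1" "1 \<le> pstart S jc"
     "pstart S jc \<le> length ?T" "?T ! (pstart S jc - 1) = ?T ! k"
    using char_ground[OF v, of k] by auto
  obtain ja where ja: "ja < length S" "snd (S ! ja) = None" "fst (S ! ja) = 1" "1 \<le> pstart S ja"
     "pstart S ja \<le> length ?T" "?T ! (pstart S ja - 1) = ?T ! 0"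
    using char_ground[OF v, of 0] by auto
  have tk: "?T ! k = c" by (simp add: nth_append)
  have "pstart S jc - 1 = k"
    by (rule pos_c[OF ac]) (use jc tk in auto)
  then have pc: "pstart S jc = k + 1" using jc(4) by linarith
  have a0: "?T ! 0 = a" using k by (simp add: nth_append)
  have "ja \<noteq> jc" using ja(6) jc(6) a0 ac by (auto simp: nth_append)
  then have "length S = 2 \<or> length S = 3" using ja(1) jc(1) l3 by linarith
  then show False
  proof
    assume "length S = 2"
    then obtain s0 s1 where S: "S = [s0, s1]"
      by (metis (no_types, opaque_lifting) One_nat_def Suc_1 length_0_conv length_Suc_conv)
    have "ja < 2" "jc < 2" using ja jc S by auto
    then have "(ja = 0 \<and> jc = 1) \<or> (ja = 1 \<and> jc = 0)" using \<open>ja \<noteq> jc\<close> by linarith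
    then show False using sum ja jc S k by auto
  next
    assume "length S = 3"
    then obtain s0 s1 s2 where S: "S = [s0, s1, s2]"
      by (metis (no_types, opaque_lifting) length_0_conv length_Suc_conv numeral_3_eq_3)
    have "ja < 3" "jc < 3" using ja jc S by auto
    then have "jc = 0 \<or> jc = 1 \<or> jc = 2" by linarith
    moreover have "ja = 0 \<or> ja = 1 \<or> ja = 2" using \<open>ja < 3\<close> by linarith
    ultimately show False using sum ja(3) jc(3) pc S k \<open>ja \<noteq> jc\<close>
      by (auto simp: pstart_def numeral_2_eq_2)
  qed
qed

lemma ed_refl: "ed xs xs = 0"
  by (induction xs) auto

lemma ed_eq0: "ed xs ys = 0 \<Longrightarrow> xs = ys"
  by (induction xs ys rule: ed.induct) (auto split: if_splits)

lemma ed_cons: "ed (z # xs) (z # ys) \<le> ed xs ys"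
  by simp

lemma ed_app: "ed (zs @ xs) (zs @ ys) \<le> ed xs ys"
proof (induction zs)
  case Nil then show ?case by simp
next
  case (Cons z zs)
  have "ed ((z # zs) @ xs) ((z # zs) @ ys) \<le> ed (zs @ xs) (zs @ ys)"
    using ed_cons[of z "zs @ xs" "zs @ ys"] by simp
  then show ?case using Cons.IH by linarith
qed

lemma ed_sub: "ed (a # xs) (c # xs) \<le> 1"
  using ed_refl[of xs] by simp

lemma ed_ins: "ed xs (c # xs) \<le> 1"
proof (cases xs)
  case Nil then show ?thesis by simp
next
  case (Cons x ys)
  have "ed (x # ys) (c # x # ys) \<le> ed (x # ys) (x # ys) + 1" by simp
  then show ?thesis using Cons ed_refl[of "x # ys"] by simp
qed

lemma ratio_le: "(x::real) \<ge> 0 \<Longrightarrow> x / real d \<le> x"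
proof (cases "d = 0")
  case False
  assume x: "x \<ge> 0"
  have "x * 1 \<le> x * real d" using False x by (intro mult_left_mono) auto
  then show ?thesis using False by (simp add: divide_le_eq)
qed simp

theorem mainTheorem6:
  assumes "\<exists>a c :: 'a. a \<noteq> c"
  shows "(\<forall>N. \<exists>n\<ge>N. MS_sub (bidir_b :: 'a list \<Rightarrow> nat) n \<ge> 2)
       \<and> (\<forall>N. \<exists>n\<ge>N. MS_ins (bidir_b :: 'a list \<Rightarrow> nat) n \<ge> 2)"
proof -
  obtain a c :: 'a where ac: "a \<noteq> c" using assms by blast
  have key: "real (bidir_b T') / real (bidir_b (T :: 'a list)) \<ge> 2"
    if "4 \<le> bidir_b T'" "bidir_b T \<le> 2" "T \<noteq> []" for T' T
  proof -
    have "1 \<le> bidir_b T" using b_pos[OF that(3)] .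
    then show ?thesis using that by (simp add: le_divide_eq)
  qed
  have bdd: "bdd_above {real (bidir_b T') / real (bidir_b T) | T T' :: 'a list.
      length T = n \<and> length T' = m \<and> ed T T' = 1}" for n m
  proof (rule bdd_aboveI[of _ "real m"])
    fix x assume "x \<in> {real (bidir_b T') / real (bidir_b T) | T T' :: 'a list.
      length T = n \<and> length T' = m \<and> ed T T' = 1}"
    then obtain T T' :: "'a list" where x: "x = real (bidir_b T') / real (bidir_b T)" "length T' = m"
      by blast
    have "x \<le> real (bidir_b T')" unfolding x(1) by (rule ratio_le) simp
    also have "\<dots> \<le> real m" using b_le_length[of T'] x(2) by simp
    finally show "x \<le> real m" .
  qed
  have part1: "\<exists>n\<ge>N. MS_sub (bidir_b :: 'a list \<Rightarrow> nat) n \<ge> 2" for N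
  proof -
    define k where "k = max 2 N"
    define T where "T = replicate k a @ a # replicate k a"
    define T' where "T' = replicate k a @ c # replicate k a"
    have k: "2 \<le> k" "N \<le> 2 * k + 1" unfolding k_def by auto
    have TT: "T = replicate (2 * k + 1) a" unfolding T_def
      by (simp add: replicate_add[symmetric] replicate_append_same[symmetric] mult_2)
    have lT: "length T = 2 * k + 1" "length T' = 2 * k + 1" by (simp_all add: T_def T'_def)
    have "ed T T' \<le> 1" unfolding T_def T'_def using ed_app[of "replicate k a" "a # replicate k a" "c # replicate k a"] ed_sub[of a "replicate k a" c] by linarith
    moreover have "ed T T' \<noteq> 0" proof
      assume "ed T T' = 0"
      then have "T = T'" by (rule ed_eq0)
      then have "T ! k = T' ! k" by simp
      then show False using ac by (simp add: T_def T'_def nth_append)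
    qed
    ultimately have ed1: "ed T T' = 1" by simp
    have r: "real (bidir_b T') / real (bidir_b T) \<ge> 2"
      apply (rule key)
      using b_lower[OF ac k(1)] b_rep_le2[of "2 * k + 1" a] k TT T'_def by auto
    have "real (bidir_b T') / real (bidir_b T) \<le> MS_sub (bidir_b :: 'a list \<Rightarrow> nat) (2 * k + 1)"
      unfolding MS_sub_def
      by (rule cSup_upper[OF _ bdd]) (use lT ed1 in blast)
    then show ?thesis using r k by (intro exI[of _ "2 * k + 1"]) auto
  qed
  have part2: "\<exists>n\<ge>N. MS_ins (bidir_b :: 'a list \<Rightarrow> nat) n \<ge> 2" for N
  proof -
    define k where "k = max 2 N"
    define T where "T = replicate k a @ replicate k a"
    define T' where "T' = replicate k a @ c # replicate k a"
    have k: "2 \<le> k" "N \<le> 2 * k" unfolding k_def by auto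
    have TT: "T = replicate (2 * k) a" unfolding T_def
      by (simp add: replicate_add[symmetric] mult_2)
    have lT: "length T = 2 * k" "length T' = 2 * k + 1" by (simp_all add: T_def T'_def)
    have "ed T T' \<le> 1" unfolding T_def T'_def using ed_app[of "replicate k a" "replicate k a" "c # replicate k a"] ed_ins[of "replicate k a" c] by linarith
    moreover have "ed T T' \<noteq> 0" proof
      assume "ed T T' = 0"
      then have "T = T'" by (rule ed_eq0)
      then show False using lT by simp
    qed
    ultimately have ed1: "ed T T' = 1" by simp
    have r: "real (bidir_b T') / real (bidir_b T) \<ge> 2"
      apply (rule key)
      using b_lower[OF ac k(1)] b_rep_le2[of "2 * k" a] k TT T'_def by auto
    have "real (bidir_b T') / real (bidir_b T) \<le> MS_ins (bidir_b :: 'a list \<Rightarrow> nat) (2 * k)"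
      unfolding MS_ins_def
      by (rule cSup_upper[OF _ bdd]) (use lT ed1 in blast)
    then show ?thesis using r k by (intro exI[of _ "2 * k"]) auto
  qed
  show ?thesis using part1 part2 by blast
qed

end
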